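(* Let $X$ be a complex Banach space and $T:X\to X$ a bounded linear operator. Then: (i) for every $\lambda\in\mathbb C$ with $|\lambda|=1$ we have $\mathrm{Rec}(T)=\mathrm{Rec}(\lambda T)$; (ii) for every positive integer $p$ we have $\mathrm{Rec}(T)=\mathrm{Rec}(T^p)$. In particular, $T$ is recurrent if and only if $T^p$ is recurrent for every positive integer $p$, if and only if $\lambda T$ is recurrent for every $\lambda\in\mathbb T=\{z\in\mathbb C:|z|=1\}$.
   Context: A vector $x\in X$ is recurrent for $T$ if there is a strictly increasing sequence of positive integers $(k_n)$ with $T^{k_n}x\to x$; $\mathrm{Rec}(T)$ denotes the set of recurrent vectors of $T$. The operator $T$ is called recurrent if for every non-empty open set $U\subset X$ there is $k\in\mathbb N$ with $U\cap T^{-k}(U)\neq\emptyset$. *)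

theory Defs
  imports "HOL-Analysis.Analysis"
begin

text \<open>A complex
  Banach space is encoded as a real Banach space together with a complex
  structure J (multiplication by the imaginary unit): J is real-linear,
  J (J x) = -x, and the induced complex scalar multiplication
  (a + i b) x = a x + b J x is absolutely homogeneous for the norm.\<close>
definition cscale :: "('a::real_normed_vector \<Rightarrow> 'a) \<Rightarrow> complex \<Rightarrow> 'a \<Rightarrow> 'a" where
  "cscale J c x = Re c *\<^sub>R x + Im c *\<^sub>R J x"

definition complex_structure :: "('a::real_normed_vector \<Rightarrow> 'a) \<Rightarrow> bool" where
  "complex_structure J \<longleftrightarrow> linear J \<and> (\<forall>x. J (J x) = - x) \<and>
     (\<forall>c x. norm (cscale J c x) = cmod c * norm x)"

definition bounded_clinear_wrt :: "('a::real_normed_vector \<Rightarrow> 'a) \<Rightarrow> ('a \<Rightarrow> 'a) \<Rightarrow> bool" where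
  "bounded_clinear_wrt J T \<longleftrightarrow> bounded_linear T \<and> (\<forall>x. T (J x) = J (T x))"

definition Rec :: "('a::topological_space \<Rightarrow> 'a) \<Rightarrow> 'a set" where
  "Rec T = {x. \<exists>k::nat \<Rightarrow> nat. strict_mono k \<and> (\<forall>n. 0 < k n) \<and>
                  (\<lambda>n. (T ^^ k n) x) \<longlonglongrightarrow> x}"

definition recurrent :: "('a::topological_space \<Rightarrow> 'a) \<Rightarrow> bool" where
  "recurrent T \<longleftrightarrow> (\<forall>U. open U \<and> U \<noteq> {} \<longrightarrow>
                     (\<exists>k::nat. 0 < k \<and> U \<inter> (T ^^ k) -` U \<noteq> {}))"

end

theory Submission
  imports Defs "HOL-Analysis.Analysis"
begin


definition W :: "('a::metric_space \<Rightarrow> 'a) \<Rightarrow> 'a \<Rightarrow> bool" where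
  "W T x \<longleftrightarrow> (\<forall>e>0. \<exists>k>0. dist ((T ^^ k) x) x < e)"

lemma funpow_fix_mult:
  assumes "(T ^^ k) x = x" shows "(T ^^ (k * j)) x = x"
proof (induction j)
  case 0 then show ?case by simp
next
  case (Suc j)
  have "T ^^ (k * Suc j) = T ^^ k \<circ> T ^^ (k * j)" by (simp add: funpow_add[symmetric])
  then show ?case using Suc assms by simp
qed

lemma W_strong:
  fixes T :: "'a::metric_space \<Rightarrow> 'a"
  assumes "W T x"
  shows "\<forall>e>0. \<forall>N. \<exists>m>N. dist ((T ^^ m) x) x < e"
proof (cases "\<exists>k>0. (T ^^ k) x = x")
  case True
  then obtain k where k: "k > 0" "(T ^^ k) x = x" by blast
  show ?thesis
  proof (intro allI impI)
    fix e :: real and N assume "e > 0"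
    have "(T ^^ (k * Suc N)) x = x" by (rule funpow_fix_mult[OF k(2)])
    moreover have "1 * Suc N \<le> k * Suc N" using k(1) by (intro mult_le_mono1) simp
    then have "k * Suc N > N" by simp
    ultimately show "\<exists>m>N. dist ((T ^^ m) x) x < e" using \<open>e>0\<close> by (intro exI[of _ "k * Suc N"]) auto
  qed
next
  case False
  show ?thesis
  proof (intro allI impI)
    fix e :: real and N assume e: "e > 0"
    define D where "D = insert e ((\<lambda>k. dist ((T ^^ k) x) x) ` {1..N})"
    define d where "d = Min D"
    have fin: "finite D" "D \<noteq> {}" by (auto simp: D_def)
    have nf: "\<And>k. k > 0 \<Longrightarrow> (T ^^ k) x \<noteq> x" using False by blast
    have "\<forall>y\<in>D. y > 0" using nf e by (auto simp: D_def)
    then have d0: "d > 0" using fin by (simp add: d_def)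
    obtain k where k: "k > 0" "dist ((T ^^ k) x) x < d" using assms d0 unfolding W_def by blast
    have "k > N"
    proof (rule ccontr)
      assume "\<not> k > N"
      then have "dist ((T ^^ k) x) x \<in> D" using k(1) by (auto simp: D_def)
      then have "d \<le> dist ((T ^^ k) x) x" using fin by (simp add: d_def)
      then show False using k by simp
    qed
    moreover have "d \<le> e" using fin by (simp add: d_def D_def)
    ultimately show "\<exists>m>N. dist ((T ^^ m) x) x < e" using k by (intro exI[of _ k]) auto
  qed
qed

lemma W_Rec:
  fixes T :: "'a::metric_space \<Rightarrow> 'a"
  assumes "W T x" shows "x \<in> Rec T"
proof -
  note S = W_strong[OF assms]
  define P where "P n m \<longleftrightarrow> 0 < m \<and> dist ((T ^^ m) x) x < inverse (real (Suc n))" for n m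
  have "\<exists>f. \<forall>n. P n (f n) \<and> f n < f (Suc n)"
  proof (rule dependent_nat_choice)
    show "\<exists>m. P 0 m" using S[rule_format, of "inverse (real (Suc 0))" 0] by (auto simp: P_def)
    fix m n assume "P n m"
    obtain m' where "m' > m" "dist ((T ^^ m') x) x < inverse (real (Suc (Suc n)))"
      using S[rule_format, of "inverse (real (Suc (Suc n)))" m] by auto
    then show "\<exists>m'. P (Suc n) m' \<and> m < m'" by (intro exI[of _ m']) (auto simp: P_def)
  qed
  then obtain f where f: "\<And>n. P n (f n)" "\<And>n. f n < f (Suc n)" by blast
  have sm: "strict_mono f" using f(2) by (simp add: strict_mono_Suc_iff)
  have lim: "(\<lambda>n. (T ^^ f n) x) \<longlonglongrightarrow> x"
  proof (rule metric_LIMSEQ_I)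
    fix r :: real assume "r > 0"
    then obtain n0 where n0: "inverse (real (Suc n0)) < r" using reals_Archimedean by blast
    have "dist ((T ^^ f n) x) x < r" if "n \<ge> n0" for n
    proof -
      have "inverse (real (Suc n)) \<le> inverse (real (Suc n0))" using that by (simp add: field_simps)
      then show ?thesis using f(1)[of n] n0 unfolding P_def by linarith
    qed
    then show "\<exists>no. \<forall>n\<ge>no. dist ((T ^^ f n) x) x < r" by blast
  qed
  have pos: "\<forall>n. 0 < f n" using f(1) unfolding P_def by blast
  show ?thesis unfolding Rec_def mem_Collect_eq using sm lim pos by blast
qed

lemma Rec_W:
  fixes T :: "'a::metric_space \<Rightarrow> 'a"
  assumes "x \<in> Rec T" shows "W T x"
proof -
  obtain k where k: "strict_mono k" "\<forall>n. 0 < k n" "(\<lambda>n. (T ^^ k n) x) \<longlonglongrightarrow> x"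
    using assms unfolding Rec_def by blast
  show ?thesis unfolding W_def
  proof (intro allI impI)
    fix e :: real assume "e > 0"
    then obtain no where "\<forall>n\<ge>no. dist ((T ^^ k n) x) x < e" using k(3)[unfolded lim_sequentially] \<open>e > 0\<close> by blast
    then show "\<exists>m>0. dist ((T ^^ m) x) x < e" using k(2) by blast
  qed
qed

lemma Rec_eq_W: "x \<in> Rec T \<longleftrightarrow> W T (x::'a::metric_space)"
  using Rec_W W_Rec by blast



lemma KL:
  fixes T :: "'a::metric_space \<Rightarrow> 'a" and l :: complex
  assumes cont: "\<And>k. continuous_on UNIV (T^^k)" and W: "W T x" and l: "cmod l = 1"
  shows "\<forall>e>0. \<exists>m>0. dist ((T^^m) x) x < e \<and> cmod (l^m - 1) < e"
proof -
  define good where "good \<mu> \<longleftrightarrow> (\<forall>e>0. \<exists>m>0. dist ((T^^m) x) x < e \<and> cmod (l^m - \<mu>) < e)" for \<mu>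
  have sc: "seq_compact (sphere (0::complex) 1)" by (intro compact_imp_seq_compact compact_sphere)
  have s1: "\<exists>\<mu>. cmod \<mu> = 1 \<and> good \<mu>"
  proof -
    have "\<forall>n. \<exists>k>0. dist ((T^^k) x) x < inverse (real (Suc n))" using W by (simp add: W_def)
    from choice[OF this] obtain f where f: "\<And>n. f n > 0 \<and> dist ((T^^f n) x) x < inverse (real (Suc n))" by blast
    have sph: "\<forall>n. l ^ f n \<in> sphere 0 1" using l by (simp add: norm_power)
    have "\<exists>\<mu>\<in>sphere 0 1. \<exists>r. strict_mono r \<and> ((\<lambda>n. l ^ f n) \<circ> r) \<longlonglongrightarrow> \<mu>"
      using sc sph unfolding seq_compact_def by (elim allE[of _ "\<lambda>n. l ^ f n"] impE) simp_all
    then obtain \<mu> r where mu: "\<mu> \<in> sphere 0 1" "strict_mono r" "((\<lambda>n. l ^ f n) \<circ> r) \<longlonglongrightarrow> \<mu>"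
      by (elim bexE exE conjE)
    have "good \<mu>" unfolding good_def
    proof (intro allI impI)
      fix e :: real assume e: "e > 0"
      obtain n0 where n0: "inverse (real (Suc n0)) < e" using reals_Archimedean e by blast
      obtain n1 where n1: "\<forall>n\<ge>n1. dist (((\<lambda>n. l ^ f n) \<circ> r) n) \<mu> < e"
        using mu(3) e lim_sequentially by blast
      define n where "n = max n0 n1"
      have "r n \<ge> n" using seq_suble[OF mu(2)] .
      hence "inverse (real (Suc (r n))) \<le> inverse (real (Suc n0))" by (simp add: n_def field_simps)
      hence "dist ((T^^f (r n)) x) x < e" using f[of "r n"] n0 by linarith
      moreover have "cmod (l ^ f (r n) - \<mu>) < e" using n1[rule_format, of n] by (simp add: n_def dist_norm)
      ultimately show "\<exists>m>0. dist ((T^^m) x) x < e \<and> cmod (l^m - \<mu>) < e" using f[of "r n"] by blast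
    qed
    then show ?thesis using mu(1) by auto
  qed
  have s2: "good (a * b)" if a: "good a" and b: "good b" "cmod b = 1" for a b
    unfolding good_def
  proof (intro allI impI)
    fix e :: real assume e: "e > 0"
    have e2: "e/2 > 0" using e by simp
    obtain m1 where m1: "m1 > 0" "dist ((T^^m1) x) x < e/2" "cmod (l^m1 - a) < e/2"
      using a e2 unfolding good_def by blast
    have "\<exists>d>0. \<forall>y\<in>UNIV. dist y x < d \<longrightarrow> dist ((T^^m1) y) ((T^^m1) x) < e/2"
      using cont[of m1, unfolded continuous_on_iff] e2 by blast
    then obtain d where d: "d > 0" "\<And>y. dist y x < d \<Longrightarrow> dist ((T^^m1) y) ((T^^m1) x) < e/2"
      by blast
    have "min d (e/2) > 0" using d(1) e by simp
    then obtain m2 where m2: "m2 > 0" "dist ((T^^m2) x) x < min d (e/2)" "cmod (l^m2 - b) < min d (e/2)"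
      using b(1) unfolding good_def by blast
    have "(T^^(m1+m2)) x = (T^^m1) ((T^^m2) x)" by (simp add: funpow_add)
    hence "dist ((T^^(m1+m2)) x) x \<le> dist ((T^^m1) ((T^^m2) x)) ((T^^m1) x) + dist ((T^^m1) x) x"
      by (simp add: dist_triangle)
    also have "\<dots> < e" using d(2)[of "(T^^m2) x"] m2(2) m1(2) by simp
    finally have 1: "dist ((T^^(m1+m2)) x) x < e" .
    have "l^(m1+m2) - a*b = l^m1 * (l^m2 - b) + b * (l^m1 - a)" by (simp add: power_add algebra_simps)
    hence "cmod (l^(m1+m2) - a*b) \<le> cmod (l^m1 * (l^m2 - b)) + cmod (b * (l^m1 - a))"
      by (simp only: norm_triangle_ineq)
    also have "\<dots> = cmod (l^m2 - b) + cmod (l^m1 - a)" using l b(2) by (simp add: norm_mult norm_power)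
    also have "\<dots> < e" using m1(3) m2(3) by simp
    finally show "\<exists>m>0. dist ((T^^m) x) x < e \<and> cmod (l^m - a*b) < e"
      using 1 m1(1) by (intro exI[of _ "m1+m2"]) auto
  qed
  obtain \<mu> where mu: "cmod \<mu> = 1" "good \<mu>" using s1 by blast
  have s3: "good (\<mu> ^ Suc n)" for n
  proof (induction n)
    case 0 then show ?case using mu by simp
  next
    case (Suc n)
    have "cmod (\<mu> ^ Suc n) = 1" using mu(1) by (simp only: norm_power) simp
    then have "good (\<mu> * \<mu> ^ Suc n)" using s2[OF mu(2) Suc] by blast
    then show ?case by simp
  qed
  have s5: "\<exists>d>0. cmod (\<mu>^d - 1) < \<delta>" if dp: "\<delta> > 0" for \<delta>
  proof -
    have sph: "\<forall>n. \<mu> ^ n \<in> sphere 0 1" using mu(1) by (simp add: norm_power)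
    have "\<exists>L\<in>sphere 0 1. \<exists>r. strict_mono r \<and> ((\<lambda>n. \<mu> ^ n) \<circ> r) \<longlonglongrightarrow> L"
      using sc sph unfolding seq_compact_def by (elim allE[of _ "\<lambda>n. \<mu> ^ n"] impE) simp_all
    then obtain L r where r: "strict_mono r" "((\<lambda>n. \<mu> ^ n) \<circ> r) \<longlonglongrightarrow> L"
      by (elim bexE exE conjE)
    have "Cauchy ((\<lambda>n. \<mu> ^ n) \<circ> r)" using r(2) by (rule LIMSEQ_imp_Cauchy)
    then obtain M where M: "\<forall>i\<ge>M. \<forall>j\<ge>M. dist (\<mu> ^ r i) (\<mu> ^ r j) < \<delta>"
      using dp unfolding Cauchy_def o_def by blast
    define d where "d = r (Suc M) - r M"
    have lt: "r (Suc M) > r M" using r(1) by (simp add: strict_mono_def)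
    hence "r (Suc M) = r M + d" by (simp add: d_def)
    hence "\<mu> ^ r (Suc M) = \<mu> ^ r M * \<mu> ^ d" by (simp only: power_add)
    hence "dist (\<mu> ^ r (Suc M)) (\<mu> ^ r M) = cmod (\<mu> ^ r M * (\<mu> ^ d - 1))"
      by (simp add: dist_norm right_diff_distrib)
    also have "\<dots> = cmod (\<mu> ^ d - 1)" using mu(1) by (simp add: norm_mult norm_power)
    finally have "cmod (\<mu> ^ d - 1) < \<delta>" using M[rule_format, of "Suc M" M] by simp
    moreover have "d > 0" using lt by (simp add: d_def)
    ultimately show ?thesis by blast
  qed
  show ?thesis
  proof (intro allI impI)
    fix e::real assume e: "e > 0"
    have e2: "e/2 > 0" using e by simp
    obtain d where d: "d > 0" "cmod (\<mu>^d - 1) < e/2" using s5[OF e2] by blast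
    have "Suc (d - 1) = d" using d(1) by simp
    then have "good (\<mu>^d)" using s3[of "d-1"] by simp
    then obtain m where m: "m > 0" "dist ((T^^m) x) x < e/2" "cmod (l^m - \<mu>^d) < e/2"
      using e2 unfolding good_def by blast
    have "l^m - 1 = (l^m - \<mu>^d) + (\<mu>^d - 1)" by simp
    hence "cmod (l^m - 1) \<le> cmod (l^m - \<mu>^d) + cmod (\<mu>^d - 1)" by (simp only: norm_triangle_ineq)
    then have "cmod (l^m - 1) < e" using m(3) d(2) by linarith
    moreover have "dist ((T^^m) x) x < e" using m(2) e by linarith
    ultimately show "\<exists>m>0. dist ((T^^m) x) x < e \<and> cmod (l^m - 1) < e" using m(1) by blast
  qed
qed



lemma cs_facts:
  assumes "complex_structure J"
  shows "linear J" "\<And>x. J (J x) = - x" "\<And>c x. norm (cscale J c x) = cmod c * norm x"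
  using assms unfolding complex_structure_def by auto

lemma cscale_one: "cscale J 1 y = y" by (simp add: cscale_def)

lemma cscale_diff_left: "cscale J a y - cscale J b y = cscale J (a - b) y"
  by (simp add: cscale_def scaleR_diff_left)

lemma cscale_diff_right: "linear J \<Longrightarrow> cscale J c y - cscale J c z = cscale J c (y - z)"
  by (simp add: cscale_def linear_diff scaleR_diff_right)

lemma cscale_mult:
  assumes "complex_structure J"
  shows "cscale J a (cscale J b y) = cscale J (a * b) y"
proof -
  note cs = cs_facts[OF assms]
  have "J (cscale J b y) = Re b *\<^sub>R J y - Im b *\<^sub>R y"
    unfolding cscale_def using cs(1,2) by (simp add: linear_add linear_scale)
  then have "cscale J a (cscale J b y) = Re a *\<^sub>R (cscale J b y) + Im a *\<^sub>R (Re b *\<^sub>R J y - Im b *\<^sub>R y)"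
    by (simp only: cscale_def[of J a])
  also have "\<dots> = cscale J (a*b) y"
    by (simp add: cscale_def algebra_simps scaleR_add_right scaleR_diff_right scaleR_add_left scaleR_diff_left)
  finally show ?thesis .
qed

lemma J_cscale:
  assumes "complex_structure J"
  shows "J (cscale J c y) = cscale J c (J y)"
proof -
  note cs = cs_facts[OF assms]
  show ?thesis unfolding cscale_def using cs(1,2) by (simp add: linear_add linear_scale)
qed

lemma T_cscale:
  assumes "bounded_clinear_wrt J T"
  shows "T (cscale J c y) = cscale J c (T y)"
proof -
  have "linear T" "\<And>x. T (J x) = J (T x)" using assms
    unfolding bounded_clinear_wrt_def by (auto intro: bounded_linear.linear)
  then show ?thesis unfolding cscale_def by (simp add: linear_add linear_scale)
qed

lemma bl_cscale:
  assumes "complex_structure J"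
  shows "bounded_linear (cscale J c)"
proof (rule bounded_linear_intro[where K = "cmod c"])
  note cs = cs_facts[OF assms]
  fix x y :: 'a
  show "cscale J c (x + y) = cscale J c x + cscale J c y"
    unfolding cscale_def using cs(1) by (simp add: linear_add algebra_simps)
  fix r :: real
  show "cscale J c (r *\<^sub>R x) = r *\<^sub>R cscale J c x"
    unfolding cscale_def using cs(1) by (simp add: linear_scale algebra_simps)
  show "norm (cscale J c x) \<le> norm x * cmod c" using cs(3) by (simp add: mult.commute)
qed

lemma bcl_S:
  assumes cs: "complex_structure J" and T: "bounded_clinear_wrt J T"
  shows "bounded_clinear_wrt J (\<lambda>y. cscale J l (T y))"
  unfolding bounded_clinear_wrt_def
proof
  have "bounded_linear T" using T unfolding bounded_clinear_wrt_def by blast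
  then show "bounded_linear (\<lambda>y. cscale J l (T y))"
    using bl_cscale[OF cs] by (rule bounded_linear_compose[rotated])
  show "\<forall>x. cscale J l (T (J x)) = J (cscale J l (T x))"
    using T J_cscale[OF cs] unfolding bounded_clinear_wrt_def by simp
qed

lemma bl_funpow:
  fixes T :: "'a::real_normed_vector \<Rightarrow> 'a"
  assumes "bounded_linear T" shows "bounded_linear (T ^^ k)"
proof (induction k)
  case 0
  have "T ^^ 0 = (\<lambda>x. x)" by (rule ext) simp
  then show ?case using bounded_linear_ident by (simp only:)
next
  case (Suc k)
  have "bounded_linear (\<lambda>x. T ((T ^^ k) x))" using assms Suc by (rule bounded_linear_compose)
  then show ?case by (simp add: o_def)
qed

lemma cont_funpow:
  assumes "bounded_clinear_wrt J T" shows "continuous_on UNIV (T ^^ k)"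
  using assms unfolding bounded_clinear_wrt_def by (intro linear_continuous_on bl_funpow) blast

lemma S_pow:
  assumes cs: "complex_structure J" and T: "bounded_clinear_wrt J T"
  shows "((\<lambda>y. cscale J l (T y)) ^^ m) x = cscale J (l ^ m) ((T ^^ m) x)"
proof (induction m)
  case 0 then show ?case by (simp add: cscale_one)
next
  case (Suc m)
  have "((\<lambda>y. cscale J l (T y)) ^^ Suc m) x = cscale J l (T (cscale J (l ^ m) ((T ^^ m) x)))"
    using Suc by simp
  also have "\<dots> = cscale J (l * l ^ m) (T ((T ^^ m) x))"
    by (simp add: T_cscale[OF T] cscale_mult[OF cs])
  finally show ?case by simp
qed

lemma L1:
  assumes cs: "complex_structure J" and T: "bounded_clinear_wrt J T" and l: "cmod l = 1"
    and x: "x \<in> Rec T"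
  shows "x \<in> Rec (\<lambda>y. cscale J l (T y))"
proof -
  have K: "\<forall>e>0. \<exists>m>0. dist ((T^^m) x) x < e \<and> cmod (l^m - 1) < e"
    using KL[OF cont_funpow[OF T] Rec_W[OF x] l] .
  have "W (\<lambda>y. cscale J l (T y)) x" unfolding W_def
  proof (intro allI impI)
    fix e :: real assume e: "e > 0"
    define e' where "e' = e / (1 + norm x)"
    have e': "e' > 0" using e by (simp add: e'_def add_pos_nonneg)
    obtain m where m: "m > 0" "dist ((T^^m) x) x < e'" "cmod (l^m - 1) < e'" using K e' by blast
    have h1: "cscale J (l^m) ((T^^m) x) - cscale J (l^m) x = cscale J (l^m) ((T^^m) x - x)"
      using cscale_diff_right[OF cs_facts(1)[OF cs], of "l^m" "(T^^m) x" x] .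
    have h2: "cscale J (l^m) x - x = cscale J (l^m - 1) x"
      using cscale_diff_left[of J "l^m" x 1] by (simp add: cscale_one)
    have "cscale J (l^m) ((T^^m) x) - x = (cscale J (l^m) ((T^^m) x) - cscale J (l^m) x) + (cscale J (l^m) x - x)"
      by simp
    also have "\<dots> = cscale J (l^m) ((T^^m) x - x) + cscale J (l^m - 1) x" by (simp only: h1 h2)
    finally have eq: "cscale J (l^m) ((T^^m) x) - x = cscale J (l^m) ((T^^m) x - x) + cscale J (l^m - 1) x" .
    have "dist (((\<lambda>y. cscale J l (T y)) ^^ m) x) x = norm (cscale J (l^m) ((T^^m) x) - x)"
      by (simp add: S_pow[OF cs T] dist_norm)
    also have "\<dots> \<le> norm (cscale J (l^m) ((T^^m) x - x)) + norm (cscale J (l^m - 1) x)"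
      unfolding eq by (rule norm_triangle_ineq)
    also have "\<dots> = norm ((T^^m) x - x) + cmod (l^m - 1) * norm x"
      using cs_facts(3)[OF cs] l by (simp add: norm_power)
    also have "\<dots> < e' + e' * norm x"
      using m(2,3) by (intro add_less_le_mono mult_right_mono) (auto simp: dist_norm)
    also have "\<dots> = e"
    proof -
      have nz: "1 + norm x \<noteq> 0" using norm_ge_zero[of x] by linarith
      have "e' + e' * norm x = e' * (1 + norm x)" by (simp add: algebra_simps)
      also have "\<dots> = e" using nz by (simp add: e'_def)
      finally show ?thesis .
    qed
    finally show "\<exists>k>0. dist (((\<lambda>y. cscale J l (T y)) ^^ k) x) x < e"
      using m(1) by blast
  qed
  then show ?thesis by (rule W_Rec)
qed



lemma Wp_W:
  fixes T :: "'a::metric_space \<Rightarrow> 'a"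
  assumes "p > 0" "W (T ^^ p) x" shows "W T x"
  unfolding W_def
proof (intro allI impI)
  fix e :: real assume "e > 0"
  then obtain k where k: "k > 0" "dist (((T ^^ p) ^^ k) x) x < e" using assms(2) unfolding W_def by blast
  have "dist ((T ^^ (p * k)) x) x < e" using k(2) by (simp add: funpow_mult)
  moreover have "p * k > 0" using k(1) assms(1) by simp
  ultimately show "\<exists>m>0. dist ((T ^^ m) x) x < e" by blast
qed

lemma L2:
  fixes T :: "'a::metric_space \<Rightarrow> 'a"
  assumes cont: "\<And>k. continuous_on UNIV (T^^k)" and p: "p > 0" and x: "W T x"
  shows "W (T ^^ p) x"
proof -
  define l where "l = exp (2 * complex_of_real pi * \<i> / of_nat p)"
  have lpow: "l ^ m = exp (of_nat m * (2 * complex_of_real pi * \<i> / of_nat p))" for m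
    by (simp only: l_def exp_of_nat_mult)
  have l1: "cmod l = 1" unfolding l_def by (simp add: norm_exp_eq_Re)
  have lp: "l ^ p = 1" using lpow[of p] p by simp
  have lmod: "l ^ m = l ^ (m mod p)" for m
  proof -
    have "l ^ m = l ^ (p * (m div p) + m mod p)" by simp
    also have "\<dots> = (l ^ p) ^ (m div p) * l ^ (m mod p)" by (simp only: power_add power_mult)
    finally show ?thesis using lp by simp
  qed
  have ldvd: "p dvd m" if "l ^ m = 1" for m
  proof -
    from that have "exp (of_nat m * (2 * complex_of_real pi * \<i> / of_nat p)) = 1" by (simp add: lpow)
    then obtain n :: int where n: "Im (of_nat m * (2 * complex_of_real pi * \<i> / of_nat p)) = of_int (2 * n) * pi"
      unfolding exp_eq_1 by blast
    have "Im (of_nat m * (2 * complex_of_real pi * \<i> / of_nat p)) = real m * 2 * pi / real p"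
      by simp
    with n have "real m * 2 * pi / real p = real_of_int (2 * n) * pi" by simp
    then have "real m = real p * real_of_int n" using p by (simp add: field_simps)
    then have "int m = int p * n" by (metis of_int_eq_iff of_int_mult of_int_of_nat_eq)
    then show ?thesis by (metis dvd_triv_left int_dvd_int_iff)
  qed
  define D where "D = insert 1 ((\<lambda>r. cmod (l ^ r - 1)) ` {r. r < p \<and> l ^ r \<noteq> 1})"
  define \<delta> where "\<delta> = Min D"
  have fin: "finite D" "D \<noteq> {}" by (auto simp: D_def)
  have "\<forall>y\<in>D. y > 0" by (auto simp: D_def)
  then have d0: "\<delta> > 0" using fin by (simp add: \<delta>_def)
  have K: "\<forall>e>0. \<exists>m>0. dist ((T^^m) x) x < e \<and> cmod (l^m - 1) < e" using KL[OF cont x l1] .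
  show ?thesis unfolding W_def
  proof (intro allI impI)
    fix e :: real assume e: "e > 0"
    then have "min e \<delta> > 0" using d0 by simp
    then obtain m where m: "m > 0" "dist ((T^^m) x) x < min e \<delta>" "cmod (l^m - 1) < min e \<delta>"
      using K by blast
    have "l ^ m = 1"
    proof (rule ccontr)
      assume ne: "l ^ m \<noteq> 1"
      then have "cmod (l ^ (m mod p) - 1) \<in> D" using lmod[of m] p by (auto simp: D_def)
      then have "\<delta> \<le> cmod (l ^ (m mod p) - 1)" using fin by (simp add: \<delta>_def)
      then show False using m(3) lmod[of m] by simp
    qed
    then have "p dvd m" by (rule ldvd)
    then obtain j where j: "m = p * j" by blast
    then have "j > 0" using m(1) by simp
    moreover have "dist (((T ^^ p) ^^ j) x) x < e" using m(2) j by (simp add: funpow_mult)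
    ultimately show "\<exists>k>0. dist (((T ^^ p) ^^ k) x) x < e" by blast
  qed
qed

lemma rec_dense:
  fixes T :: "'a::banach \<Rightarrow> 'a"
  assumes cont: "\<And>k. continuous_on UNIV (T^^k)" and rc: "recurrent T" and U: "open U" "U \<noteq> {}"
  shows "\<exists>x\<in>U. W T x"
proof -
  define A where "A n = {x. \<exists>k>0. dist ((T^^k) x) x < inverse (real (Suc n))}" for n
  have opA: "open (A n)" for n
  proof -
    have "A n = (\<Union>k\<in>{0<..}. {x. dist ((T^^k) x) x < inverse (real (Suc n))})"
      by (auto simp: A_def)
    moreover have "open {x. dist ((T^^k) x) x < inverse (real (Suc n))}" for k
      by (intro open_Collect_less continuous_on_dist cont continuous_on_id continuous_on_const)
    ultimately show ?thesis by auto
  qed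
  have clA: "closure (A n) = UNIV" for n
  proof -
    have "y \<in> closure (A n)" for y
      unfolding closure_approachable
    proof (intro allI impI)
      fix e :: real assume e: "e > 0"
      define r where "r = min e (inverse (real (Suc n))) / 2"
      have r: "r > 0" using e by (simp add: r_def)
      have "open (ball y r)" "ball y r \<noteq> {}" using r by auto
      then obtain k where k: "0 < k" "ball y r \<inter> (T ^^ k) -` ball y r \<noteq> {}"
        using rc unfolding recurrent_def by blast
      then obtain z where z: "z \<in> ball y r" "(T ^^ k) z \<in> ball y r" by blast
      have "dist ((T^^k) z) z \<le> dist ((T^^k) z) y + dist y z" by (rule dist_triangle)
      also have "\<dots> < r + r" using z by (intro add_strict_mono) (auto simp: dist_commute)
      also have "\<dots> \<le> inverse (real (Suc n))" by (simp add: r_def)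
      finally have "z \<in> A n" using k(1) by (auto simp: A_def)
      moreover have "dist z y < e" using z(1) r by (simp add: r_def dist_commute)
      ultimately show "\<exists>z\<in>A n. dist z y < e" by blast
    qed
    then show ?thesis by auto
  qed
  have "euclidean closure_of \<Inter> (range A) = topspace euclidean"
    by (rule Baire_category) (auto simp: completely_metrizable_space_euclidean opA clA)
  then have "closure (\<Inter> (range A)) = UNIV" by simp
  then have "U \<inter> \<Inter> (range A) \<noteq> {}" using U open_Int_closure_eq_empty[OF U(1), of "\<Inter> (range A)"] by auto
  then obtain x where x: "x \<in> U" "\<And>n. x \<in> A n" by blast
  have "W T x" unfolding W_def
  proof (intro allI impI)
    fix e :: real assume "e > 0"
    then obtain n where "inverse (real (Suc n)) < e" using reals_Archimedean by blast
    then show "\<exists>k>0. dist ((T^^k) x) x < e" using x(2)[of n] unfolding A_def by force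
  qed
  then show ?thesis using x(1) by blast
qed

lemma dense_rec:
  fixes T :: "'a::metric_space \<Rightarrow> 'a"
  assumes "\<And>U. open U \<Longrightarrow> U \<noteq> {} \<Longrightarrow> \<exists>x\<in>U. W T x"
  shows "recurrent T"
  unfolding recurrent_def
proof (intro allI impI)
  fix U :: "'a set" assume U: "open U \<and> U \<noteq> {}"
  then obtain x where x: "x \<in> U" "W T x" using assms by blast
  obtain e where e: "e > 0" "ball x e \<subseteq> U" using U x(1) by (meson openE)
  obtain k where k: "k > 0" "dist ((T ^^ k) x) x < e" using x(2) e(1) unfolding W_def by blast
  have "(T ^^ k) x \<in> U" using k(2) e(2) by (auto simp: dist_commute)
  then have "x \<in> U \<inter> (T ^^ k) -` U" using x(1) by simp
  then show "\<exists>k>0. U \<inter> (T ^^ k) -` U \<noteq> {}" using k(1) by blast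
qed



theorem proposition2p3:
  fixes T J :: "'a::banach \<Rightarrow> 'a"
  assumes "complex_structure J"
    and "bounded_clinear_wrt J T"
  shows "(\<forall>l::complex. cmod l = 1 \<longrightarrow> Rec T = Rec (\<lambda>x. cscale J l (T x)))
       \<and> (\<forall>p::nat. 0 < p \<longrightarrow> Rec T = Rec (T ^^ p))
       \<and> (recurrent T \<longleftrightarrow> (\<forall>p::nat. 0 < p \<longrightarrow> recurrent (T ^^ p)))
       \<and> (recurrent T \<longleftrightarrow> (\<forall>l::complex. cmod l = 1 \<longrightarrow> recurrent (\<lambda>x. cscale J l (T x))))"
proof -
  note cs = assms(1) and bT = assms(2)
  have contT: "\<And>k. continuous_on UNIV (T^^k)" using cont_funpow[OF bT] .
  have i: "Rec T = Rec (\<lambda>x. cscale J l (T x))" if l: "cmod l = 1" for l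
  proof
    show "Rec T \<subseteq> Rec (\<lambda>x. cscale J l (T x))" using L1[OF cs bT l] by blast
    have bS: "bounded_clinear_wrt J (\<lambda>x. cscale J l (T x))" by (rule bcl_S[OF cs bT])
    have l': "cmod (cnj l) = 1" using l by simp
    have "cnj l * l = 1"
    proof -
      have "l * cnj l = complex_of_real ((cmod l)\<^sup>2)" by (rule complex_norm_square[symmetric])
      also have "\<dots> = 1" using l by simp
      finally show ?thesis by (simp only: mult.commute)
    qed
    then have eqT: "(\<lambda>y. cscale J (cnj l) (cscale J l (T y))) = T"
      by (simp add: cscale_mult[OF cs] cscale_one)
    show "Rec (\<lambda>x. cscale J l (T x)) \<subseteq> Rec T"
      using L1[OF cs bS l'] unfolding eqT by blast
  qed
  have ii: "Rec T = Rec (T ^^ p)" if p: "0 < p" for p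
  proof
    show "Rec T \<subseteq> Rec (T ^^ p)"
    proof
      fix x assume "x \<in> Rec T"
      then show "x \<in> Rec (T ^^ p)" by (rule W_Rec[OF L2[OF contT p Rec_W]])
    qed
    show "Rec (T ^^ p) \<subseteq> Rec T"
    proof
      fix x assume "x \<in> Rec (T ^^ p)"
      then show "x \<in> Rec T" by (rule W_Rec[OF Wp_W[OF p Rec_W]])
    qed
  qed
  have dense: "\<exists>x\<in>U. W T x" if "recurrent T" "open U" "U \<noteq> {}" for U
    using rec_dense[OF contT that] .
  have iii: "recurrent T \<longleftrightarrow> (\<forall>p::nat. 0 < p \<longrightarrow> recurrent (T ^^ p))"
  proof
    assume r: "recurrent T"
    show "\<forall>p::nat. 0 < p \<longrightarrow> recurrent (T ^^ p)"
    proof (intro allI impI)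
      fix p :: nat assume p: "0 < p"
      show "recurrent (T ^^ p)"
      proof (rule dense_rec)
        fix U :: "'a set" assume "open U" "U \<noteq> {}"
        then obtain x where x: "x \<in> U" "W T x" using dense[OF r] by blast
        have "W (T ^^ p) x" by (rule L2[OF contT p x(2)])
        then show "\<exists>x\<in>U. W (T ^^ p) x" using x(1) by blast
      qed
    qed
  next
    assume "\<forall>p::nat. 0 < p \<longrightarrow> recurrent (T ^^ p)"
    then have "recurrent (T ^^ 1)" by (drule_tac spec[of _ 1]) simp
    then show "recurrent T" by simp
  qed
  have iv: "recurrent T \<longleftrightarrow> (\<forall>l::complex. cmod l = 1 \<longrightarrow> recurrent (\<lambda>x. cscale J l (T x)))"
  proof
    assume r: "recurrent T"
    show "\<forall>l::complex. cmod l = 1 \<longrightarrow> recurrent (\<lambda>x. cscale J l (T x))"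
    proof (intro allI impI)
      fix l :: complex assume l: "cmod l = 1"
      show "recurrent (\<lambda>x. cscale J l (T x))"
      proof (rule dense_rec)
        fix U :: "'a set" assume "open U" "U \<noteq> {}"
        then obtain x where x: "x \<in> U" "W T x" using dense[OF r] by blast
        have "x \<in> Rec T" by (rule W_Rec[OF x(2)])
        then have "x \<in> Rec (\<lambda>x. cscale J l (T x))" using i[OF l] by simp
        then have "W (\<lambda>x. cscale J l (T x)) x" by (rule Rec_W)
        then show "\<exists>x\<in>U. W (\<lambda>x. cscale J l (T x)) x" using x(1) by blast
      qed
    qed
  next
    assume "\<forall>l::complex. cmod l = 1 \<longrightarrow> recurrent (\<lambda>x. cscale J l (T x))"
    then have "recurrent (\<lambda>x. cscale J 1 (T x))" by (drule_tac spec[of _ 1]) simp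
    then show "recurrent T" by (simp add: cscale_one)
  qed
  show ?thesis
  proof (intro conjI)
    show "\<forall>l::complex. cmod l = 1 \<longrightarrow> Rec T = Rec (\<lambda>x. cscale J l (T x))" using i by blast
    show "\<forall>p::nat. 0 < p \<longrightarrow> Rec T = Rec (T ^^ p)" using ii by blast
  qed (rule iii, rule iv)
qed

end
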